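(* Suppose the neighbor graph $\mathbb N$ (with $m\ge 2$ vertices, no self-arcs) is strongly connected and let $\mathrm D=\{\mathbb E_0,\dots,\mathbb E_p\}$ be an ear decomposition of $\mathbb N$. If for each ear $\mathbb E\in\mathrm D$ the indexed family of subspaces $\{\mathcal K_{ji}:(j,i)\text{ an arc of }\mathbb E\}$ is independent, where $\mathcal K_{ji}=\ker C_{ji}$, then $\bar{\mathbb N}$ is well-configured.
   Context: Setup: there are $m$ agents labeled $1,\dots,m$, each with state $x_i\in\mathbb R^n$. The neighbor graph $\mathbb N$ is a directed graph on vertex set $\{1,\dots,m\}$ without self-arcs; every arc $(j,i)$ is assigned a real matrix $C_{ji}$ with $n$ columns (any number of rows), and $\bar{\mathbb N}$ denotes $\mathbb N$ together with these matrices. $\bar{\mathbb N}$ is called well-configured if for all $x_1,\dots,x_m\in\mathbb R^n$, the conditions $C_{ji}x_i=C_{ji}x_j$ for every arc $(j,i)$ imply $x_1=\cdots=x_m$. A finite indexed family of subspaces $\{\mathcal S_1,\dots,\mathcal S_p\}$ of $\mathbb R^n$ is independent if $\mathcal S_i\cap\sum_{j\ne i}\mathcal S_j=0$ for every $i$. A directed path is a subgraph with distinct vertices $v_0,\dots,v_k$ ($k\ge1$) and arcs $(v_{r-1},v_r)$, $r=1,\dots,k$; its end-vertices are $v_0,v_k$. A directed cycle is a subgraph with distinct vertices $v_1,\dots,v_k$ ($k\ge 2$) and arcs $(v_r,v_{r+1})$, $r<k$, and $(v_k,v_1)$. An ear decomposition of a directed graph $\mathbb G$ (no self-arcs, at least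 two vertices) is a sequence of subgraphs $\mathbb E_0,\dots,\mathbb E_p$ such that $\mathbb E_0$ is a directed cycle, each $\mathbb E_i$ ($i\ge1$) is a directed path or directed cycle, the $\mathbb E_i$ are pairwise arc-disjoint with union $\mathbb G$, and for each $i\ge 1$: if $\mathbb E_i$ is a directed cycle it has exactly one vertex in common with $\bigcup_{k<i}\mathbb E_k$, and if it is a directed path its two end-vertices are the only vertices it has in common with $\bigcup_{k<i}\mathbb E_k$. The sets $\mathbb E_i$ are called ears. *)

theory Defs
  imports "HOL-Analysis.Analysis"
begin

text \<open>A real matrix with n columns and any number of rows is represented by the
list of its rows, each row a vector in real^'n.\<close>
type_synonym 'n mat_rows = "(real ^ 'n) list"

definition mat_apply :: "'n::finite mat_rows \<Rightarrow> real ^ 'n \<Rightarrow> real list" where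
  "mat_apply M x = map (\<lambda>r. r \<bullet> x) M"

definition mat_ker :: "'n::finite mat_rows \<Rightarrow> (real ^ 'n) set" where
  "mat_ker M = {x. mat_apply M x = map (\<lambda>_. 0) M}"

text \<open>Graph: vertex set {1..m}, arc set A. A subgraph is a pair (vertices, arcs).\<close>

definition path_arcs :: "nat list \<Rightarrow> (nat \<times> nat) set" where
  "path_arcs vs = {(vs ! (r - 1), vs ! r) | r. 1 \<le> r \<and> r < length vs}"

definition is_dpath_list :: "nat set \<times> (nat \<times> nat) set \<Rightarrow> nat list \<Rightarrow> bool" where
  "is_dpath_list E vs \<longleftrightarrow> distinct vs \<and> length vs \<ge> 2 \<and>
     fst E = set vs \<and> snd E = path_arcs vs"

definition is_dpath :: "nat set \<times> (nat \<times> nat) set \<Rightarrow> bool" where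
  "is_dpath E \<longleftrightarrow> (\<exists>vs. is_dpath_list E vs)"

definition is_dcycle :: "nat set \<times> (nat \<times> nat) set \<Rightarrow> bool" where
  "is_dcycle E \<longleftrightarrow> (\<exists>vs. distinct vs \<and> length vs \<ge> 2 \<and>
     fst E = set vs \<and> snd E = path_arcs vs \<union> {(last vs, hd vs)})"

definition ear_decomposition ::
  "nat set \<Rightarrow> (nat \<times> nat) set \<Rightarrow> (nat set \<times> (nat \<times> nat) set) list \<Rightarrow> bool" where
  "ear_decomposition V A Es \<longleftrightarrow>
     Es \<noteq> [] \<and> is_dcycle (Es ! 0) \<and>
     (\<forall>i < length Es. i \<ge> 1 \<longrightarrow> is_dpath (Es ! i) \<or> is_dcycle (Es ! i)) \<and>
     (\<forall>i < length Es. \<forall>k < length Es. i \<noteq> k \<longrightarrow> snd (Es ! i) \<inter> snd (Es ! k) = {}) \<and>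
     (\<Union>i < length Es. fst (Es ! i)) = V \<and>
     (\<Union>i < length Es. snd (Es ! i)) = A \<and>
     (\<forall>i < length Es. i \<ge> 1 \<longrightarrow>
        (is_dcycle (Es ! i) \<longrightarrow> card (fst (Es ! i) \<inter> (\<Union>k < i. fst (Es ! k))) = 1) \<and>
        (\<forall>vs. is_dpath_list (Es ! i) vs \<longrightarrow>
             fst (Es ! i) \<inter> (\<Union>k < i. fst (Es ! k)) = {hd vs, last vs}))"

definition independent_family :: "'i set \<Rightarrow> ('i \<Rightarrow> (real ^ 'n::finite) set) \<Rightarrow> bool" where
  "independent_family I S \<longleftrightarrow>
     (\<forall>a\<in>I. S a \<inter> span (\<Union>b \<in> I - {a}. S b) = {0})"

definition strongly_connected :: "nat set \<Rightarrow> (nat \<times> nat) set \<Rightarrow> bool" where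
  "strongly_connected V A \<longleftrightarrow> (\<forall>u\<in>V. \<forall>v\<in>V. (u, v) \<in> A\<^sup>*)"

definition well_configured ::
  "nat \<Rightarrow> (nat \<times> nat) set \<Rightarrow> (nat \<times> nat \<Rightarrow> 'n::finite mat_rows) \<Rightarrow> bool" where
  "well_configured m A C \<longleftrightarrow>
     (\<forall>x :: nat \<Rightarrow> real ^ 'n.
        (\<forall>(j, i) \<in> A. mat_apply (C (j, i)) (x i) = mat_apply (C (j, i)) (x j)) \<longrightarrow>
        (\<forall>i\<in>{1..m}. \<forall>j\<in>{1..m}. x i = x j))"

end

theory Submission
  imports Defs
begin

lemma indep_zero:
  assumes "finite I" "independent_family I S" "\<forall>a\<in>I. d a \<in> S a" "sum d I = 0" "a \<in> I"
  shows "d a = 0"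
proof -
  have e: "d a = - sum d (I - {a})"
    using sum.remove[OF assms(1) assms(5), of d] assms(4) by (simp add: eq_neg_iff_add_eq_0)
  have "sum d (I - {a}) \<in> span (\<Union>b \<in> I - {a}. S b)"
    by (rule span_sum) (use assms(3) in \<open>auto intro: span_base\<close>)
  then have "d a \<in> span (\<Union>b \<in> I - {a}. S b)" using e span_neg by metis
  moreover have "d a \<in> S a" using assms by auto
  ultimately show ?thesis using assms(2,5) unfolding independent_family_def by blast
qed

lemma ker_diff:
  assumes "mat_apply M u = mat_apply M v" shows "u - v \<in> mat_ker M"
  using assms unfolding mat_ker_def mat_apply_def
  by (simp add: map_eq_conv inner_diff_right)

lemma path_arcs_image: "path_arcs vs = (\<lambda>r. (vs!(r-1), vs!r)) ` {1..<length vs}"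
  by (auto simp: path_arcs_def)

lemma path_arcs_inj: "distinct vs \<Longrightarrow> inj_on (\<lambda>r. (vs!(r-1), vs!r)) {1..<length vs}"
  by (auto simp: inj_on_def nth_eq_iff_index_eq)

lemma tele_gen: fixes n :: nat shows "n \<ge> 1 \<Longrightarrow> (\<Sum>r\<in>{1..<n}. (f r - f (r-1) :: 'a::ab_group_add)) = f (n-1) - f 0"
proof (induction n)
  case 0 then show ?case by simp
next
  case (Suc n)
  show ?case
  proof (cases "n = 0")
    case True then show ?thesis by simp
  next
    case False
    then have "{1..<Suc n} = insert n {1..<n}" by auto
    then show ?thesis using Suc False by simp
  qed
qed

lemma tele:
  assumes "distinct vs" "length vs \<ge> 2"
  shows "(\<Sum>(j,i)\<in>path_arcs vs. x i - x j) = x (last vs) - (x (hd vs) :: 'a::ab_group_add)"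
proof -
  have "(\<Sum>(j,i)\<in>path_arcs vs. x i - x j) = (\<Sum>r\<in>{1..<length vs}. x (vs!r) - x (vs!(r-1)))"
    unfolding path_arcs_image by (subst sum.reindex[OF path_arcs_inj[OF assms(1)]]) simp
  also have "\<dots> = x (vs ! (length vs - 1)) - x (vs ! 0)"
    by (rule tele_gen[of _ "\<lambda>r. x (vs!r)"]) (use assms in simp)
  also have "\<dots> = x (last vs) - x (hd vs)"
    using assms by (cases vs) (auto simp: last_conv_nth)
  finally show ?thesis .
qed

lemma path_const:
  assumes "\<forall>(j,i)\<in>path_arcs vs. x i = x j"
  shows "\<forall>r < length vs. x (vs!r) = x (vs!0)"
proof (intro allI impI)
  fix r assume "r < length vs"
  then show "x (vs!r) = x (vs!0)"
  proof (induction r)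
    case 0 then show ?case by simp
  next
    case (Suc r)
    have "(vs!(Suc r - 1), vs!Suc r) \<in> path_arcs vs"
      unfolding path_arcs_image by (rule image_eqI[where x="Suc r"]) (use Suc.prems in simp_all)
    then have "case (vs!(Suc r - 1), vs!Suc r) of (j,i) \<Rightarrow> x i = x j" by (rule bspec[OF assms])
    then have "x (vs!Suc r) = x (vs!r)" by simp
    moreover have "x (vs!r) = x (vs!0)" using Suc.IH Suc.prems by simp
    ultimately show ?case by simp
  qed
qed

lemma path_arcs_finite: "finite (path_arcs vs)"
  unfolding path_arcs_image by simp

lemma last_hd_notin:
  assumes "distinct vs" "length vs \<ge> 2"
  shows "(last vs, hd vs) \<notin> path_arcs vs"
proof
  assume "(last vs, hd vs) \<in> path_arcs vs"
  then obtain r where r: "r \<in> {1..<length vs}" "(last vs, hd vs) = (vs!(r-1), vs!r)"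
    unfolding path_arcs_image by (elim imageE)
  have ne: "vs \<noteq> []" using assms(2) by auto
  have "vs ! r = hd vs" using r(2) by simp
  also have "\<dots> = vs ! 0" using ne by (rule hd_conv_nth)
  finally have "vs ! r = vs ! 0" .
  moreover have "r < length vs" "0 < length vs" using r(1) ne by auto
  ultimately have "r = 0" using assms(1) nth_eq_iff_index_eq by blast
  then show False using r(1) by simp
qed

lemma ear_const:
  fixes x :: "nat \<Rightarrow> real ^ 'n::finite"
  assumes arcs: "\<forall>(j,i)\<in>snd E. x i - x j \<in> mat_ker (C (j,i))"
    and ind: "independent_family (snd E) (\<lambda>a. mat_ker (C a))"
    and vs: "distinct vs" "length vs \<ge> 2" "fst E = set vs"
    and sh: "snd E = path_arcs vs \<or> (snd E = path_arcs vs \<union> {(last vs, hd vs)})"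
    and ends: "snd E = path_arcs vs \<Longrightarrow> x (last vs) = x (hd vs)"
  shows "\<forall>v\<in>fst E. x v = x (hd vs)"
proof -
  let ?d = "\<lambda>(j,i). x i - x j"
  have fin: "finite (snd E)" using sh path_arcs_finite by auto
  have sum0: "sum ?d (snd E) = 0"
  proof (cases "snd E = path_arcs vs")
    case True then show ?thesis using tele[OF vs(1,2), of x] ends by simp
  next
    case False
    then have "snd E = insert (last vs, hd vs) (path_arcs vs)" using sh by auto
    then show ?thesis using tele[OF vs(1,2), of x] last_hd_notin[OF vs(1,2)] path_arcs_finite
      by simp
  qed
  have P: "\<forall>a\<in>snd E. ?d a \<in> mat_ker (C a)" using arcs by auto
  have z: "\<forall>a\<in>snd E. ?d a = 0"
  proof
    fix a assume "a \<in> snd E"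
    show "?d a = 0"
      by (rule indep_zero[OF fin ind P sum0 \<open>a \<in> snd E\<close>])
  qed
  have "\<forall>(j,i)\<in>path_arcs vs. x i = x j"
  proof (intro ballI, clarify)
    fix j i assume "(j,i) \<in> path_arcs vs"
    then have "(j,i) \<in> snd E" using sh by auto
    then have "?d (j,i) = 0" by (rule bspec[OF z])
    then have "x i - x j = 0" by simp
    then show "x i = x j" by simp
  qed
  then have "\<forall>r < length vs. x (vs!r) = x (vs!0)" by (rule path_const)
  note h = this
  have hd0: "hd vs = vs ! 0" using vs by (intro hd_conv_nth) auto
  show ?thesis
  proof
    fix v assume "v \<in> fst E"
    then obtain r where r: "r < length vs" "v = vs ! r" using vs(3) by (auto simp: in_set_conv_nth)
    have "x (vs ! r) = x (vs ! 0)" using h r(1) by blast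
    then show "x v = x (hd vs)" using r(2) hd0 by simp
  qed
qed

theorem theorem1:
  fixes m :: nat and A :: "(nat \<times> nat) set"
    and C :: "nat \<times> nat \<Rightarrow> (real ^ 'n::finite) list"
    and Es :: "(nat set \<times> (nat \<times> nat) set) list"
  assumes "m \<ge> 2"
    and "A \<subseteq> {1..m} \<times> {1..m}"
    and "\<forall>(j, i) \<in> A. j \<noteq> i"
    and "strongly_connected {1..m} A"
    and "ear_decomposition {1..m} A Es"
    and "\<forall>E \<in> set Es. independent_family (snd E) (\<lambda>a. mat_ker (C a))"
  shows "well_configured m A C"
  unfolding well_configured_def
proof (intro allI impI)
  fix x :: "nat \<Rightarrow> real ^ 'n"
  assume hx: "\<forall>(j, i) \<in> A. mat_apply (C (j, i)) (x i) = mat_apply (C (j, i)) (x j)"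
  note ed = assms(5)[unfolded ear_decomposition_def]
  have ne: "Es \<noteq> []" by (rule ed[THEN conjunct1])
  have cyc0: "is_dcycle (Es ! 0)" by (rule ed[THEN conjunct2, THEN conjunct1])
  have pc: "\<forall>i < length Es. i \<ge> 1 \<longrightarrow> is_dpath (Es ! i) \<or> is_dcycle (Es ! i)" by (rule ed[THEN conjunct2, THEN conjunct2, THEN conjunct1])
  have Vu: "(\<Union>i < length Es. fst (Es ! i)) = {1..m}" by (rule ed[THEN conjunct2, THEN conjunct2, THEN conjunct2, THEN conjunct2, THEN conjunct1])
  have Au: "(\<Union>i < length Es. snd (Es ! i)) = A" by (rule ed[THEN conjunct2, THEN conjunct2, THEN conjunct2, THEN conjunct2, THEN conjunct2, THEN conjunct1])
  have att: "\<forall>i < length Es. i \<ge> 1 \<longrightarrow>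
        (is_dcycle (Es ! i) \<longrightarrow> card (fst (Es ! i) \<inter> (\<Union>k < i. fst (Es ! k))) = 1) \<and>
        (\<forall>vs. is_dpath_list (Es ! i) vs \<longrightarrow>
             fst (Es ! i) \<inter> (\<Union>k < i. fst (Es ! k)) = {hd vs, last vs})" by (rule ed[THEN conjunct2, THEN conjunct2, THEN conjunct2, THEN conjunct2, THEN conjunct2, THEN conjunct2])
  have Asub: "\<And>i. i < length Es \<Longrightarrow> snd (Es ! i) \<subseteq> A" using Au by blast
  have arcs: "\<And>i. i < length Es \<Longrightarrow> \<forall>(j,i')\<in>snd (Es!i). x i' - x j \<in> mat_ker (C (j,i'))"
  proof -
    fix i assume "i < length Es"
    then have "snd (Es ! i) \<subseteq> A" by (rule Asub)
    then show "\<forall>(j,i')\<in>snd (Es!i). x i' - x j \<in> mat_ker (C (j,i'))"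
    proof (intro ballI, clarify)
      fix j i' assume "snd (Es!i) \<subseteq> A" "(j,i') \<in> snd (Es!i)"
      then have "(j,i') \<in> A" by blast
      then have "mat_apply (C (j, i')) (x i') = mat_apply (C (j, i')) (x j)" using hx by blast
      then show "x i' - x j \<in> mat_ker (C (j,i'))" by (rule ker_diff)
    qed
  qed
  have ind: "\<And>i. i < length Es \<Longrightarrow> independent_family (snd (Es!i)) (\<lambda>a. mat_ker (C a))"
    using assms(6) by auto
  have cycconst: "\<forall>u\<in>fst (Es!i). \<forall>v\<in>fst (Es!i). x u = x v"
    if "i < length Es" "is_dcycle (Es!i)" for i
  proof -
    from that(2) obtain vs where vs: "distinct vs" "length vs \<ge> 2" "fst (Es!i) = set vs"
      "snd (Es!i) = path_arcs vs \<union> {(last vs, hd vs)}" unfolding is_dcycle_def by blast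
    have "snd (Es!i) \<noteq> path_arcs vs" using vs last_hd_notin by auto
    then have "\<forall>v\<in>fst (Es!i). x v = x (hd vs)"
      by (intro ear_const[OF arcs[OF that(1)] ind[OF that(1)] vs(1,2,3)]) (simp_all add: vs(4))
    then show ?thesis by (metis)
  qed
  obtain vs0 where vs0: "length vs0 \<ge> 2" "fst (Es!0) = set vs0"
    using cyc0 unfolding is_dcycle_def by blast
  then have "vs0 \<noteq> []" by auto
  then have w0: "hd vs0 \<in> fst (Es!0)" using vs0 by simp
  define c where "c = x (hd vs0)"
  have main: "i < length Es \<Longrightarrow> \<forall>v\<in>fst (Es!i). x v = c" for i
  proof (induction i rule: less_induct)
    case (less i)
    show ?case
    proof (cases "i = 0")
      case True
      have cc: "\<forall>u\<in>fst (Es!0). \<forall>v\<in>fst (Es!0). x u = x v"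
        by (rule cycconst[of 0]) (use less.prems True cyc0 in simp_all)
      show ?thesis
      proof
        fix v assume "v \<in> fst (Es!i)"
        then have v: "v \<in> fst (Es!0)" using True by simp
        have "x v = x (hd vs0)" by (rule bspec[OF bspec[OF cc v] w0])
        then show "x v = c" unfolding c_def .
      qed
    next
      case False
      then have i1: "i \<ge> 1" by simp
      have prev: "\<forall>v\<in>(\<Union>k<i. fst (Es!k)). x v = c"
      proof
        fix v assume "v \<in> (\<Union>k<i. fst (Es!k))"
        then obtain k where k: "k < i" "v \<in> fst (Es!k)" by blast
        then have "k < length Es" using less.prems by simp
        then have "\<forall>v\<in>fst (Es!k). x v = c" by (rule less.IH[OF k(1)])
        then show "x v = c" using k(2) by (rule bspec)
      qed
      note ai = mp[OF mp[OF spec[OF att, of i] less.prems] i1]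
      show ?thesis
      proof (cases "is_dcycle (Es!i)")
        case True
        have "card (fst (Es ! i) \<inter> (\<Union>k < i. fst (Es ! k))) = 1"
          by (rule mp[OF conjunct1[OF ai] True])
        then have "fst (Es ! i) \<inter> (\<Union>k < i. fst (Es ! k)) \<noteq> {}" by (intro notI) simp
        then obtain w where w: "w \<in> fst (Es ! i)" "w \<in> (\<Union>k < i. fst (Es ! k))"
          by blast
        have xw: "x w = c" using prev w(2) by (rule bspec)
        have cc: "\<forall>u\<in>fst (Es!i). \<forall>v\<in>fst (Es!i). x u = x v" by (rule cycconst[OF less.prems True])
        show ?thesis
        proof
          fix v assume v: "v \<in> fst (Es!i)"
          have "x v = x w" by (rule bspec[OF bspec[OF cc v] w(1)])
          then show "x v = c" using xw by simp
        qed
      next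
        case False
        then have "is_dpath (Es!i)" using pc[rule_format, OF less.prems i1] by simp
        then obtain vs where vs: "is_dpath_list (Es!i) vs" unfolding is_dpath_def by blast
        have inter: "fst (Es ! i) \<inter> (\<Union>k < i. fst (Es ! k)) = {hd vs, last vs}"
          by (rule mp[OF spec[OF conjunct2[OF ai], of vs] vs])
        have "hd vs \<in> fst (Es ! i) \<inter> (\<Union>k < i. fst (Es ! k))"
          "last vs \<in> fst (Es ! i) \<inter> (\<Union>k < i. fst (Es ! k))"
          unfolding inter by simp_all
        then have "x (hd vs) = c" "x (last vs) = c" using bspec[OF prev] by blast+
        from vs have d: "distinct vs" "length vs \<ge> 2" "fst (Es!i) = set vs" "snd (Es!i) = path_arcs vs"
          unfolding is_dpath_list_def by simp_all
        have allh: "\<forall>v\<in>fst (Es!i). x v = x (hd vs)"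
          by (intro ear_const[OF arcs[OF less.prems] ind[OF less.prems] d(1,2,3)])
             (simp_all add: d(4) \<open>x (hd vs) = c\<close> \<open>x (last vs) = c\<close>)
        show ?thesis
        proof
          fix v assume v: "v \<in> fst (Es!i)"
          have "x v = x (hd vs)" using allh v by (rule bspec)
          then show "x v = c" using \<open>x (hd vs) = c\<close> by simp
        qed
      qed
    qed
  qed
  show "\<forall>i\<in>{1..m}. \<forall>j\<in>{1..m}. x i = x j"
  proof (intro ballI)
    fix i j assume "i \<in> {1..m}" "j \<in> {1..m}"
    then obtain a b where "a < length Es" "i \<in> fst (Es!a)" "b < length Es" "j \<in> fst (Es!b)"
      using Vu by blast
    then have "x i = c" "x j = c" using main by blast+
    then show "x i = x j" by simp
  qed
qed

end
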